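(* Let $(G,H,T)$ be an RCC loop folder and let $K\le G$ with $HG'\le K$. Then $|G:C_G(t)|\le|K:H|$ for all $t\in T$.
   Context: A loop folder is a triple $(G,H,T)$ with $G$ a finite group, $H\le G$, and $T\subseteq G$ with $1\in T$ such that $T$ is a set of representatives for the right cosets $H^g\backslash G$ for every $g\in G$; it is an RCC loop folder if $T$ is invariant under conjugation by $G$. $G'$ is the commutator subgroup. *)

theory Defs
  imports "HOL-Algebra.Algebra"
begin

definition conj_set :: "('a, 'b) monoid_scheme \<Rightarrow> 'a set \<Rightarrow> 'a \<Rightarrow> 'a set" where
  "conj_set G H g = (\<lambda>h. inv\<^bsub>G\<^esub> g \<otimes>\<^bsub>G\<^esub> h \<otimes>\<^bsub>G\<^esub> g) ` H"

definition right_transversal :: "('a, 'b) monoid_scheme \<Rightarrow> 'a set \<Rightarrow> 'a set \<Rightarrow> bool" where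
  "right_transversal G S T \<longleftrightarrow> T \<subseteq> carrier G \<and>
     (\<forall>C \<in> rcosets\<^bsub>G\<^esub> S. \<exists>!t. t \<in> T \<and> t \<in> C)"

definition loop_folder :: "('a, 'b) monoid_scheme \<Rightarrow> 'a set \<Rightarrow> 'a set \<Rightarrow> bool" where
  "loop_folder G H T \<longleftrightarrow> group G \<and> finite (carrier G) \<and> subgroup H G \<and>
     T \<subseteq> carrier G \<and> \<one>\<^bsub>G\<^esub> \<in> T \<and>
     (\<forall>g \<in> carrier G. right_transversal G (conj_set G H g) T)"

definition RCC_loop_folder :: "('a, 'b) monoid_scheme \<Rightarrow> 'a set \<Rightarrow> 'a set \<Rightarrow> bool" where
  "RCC_loop_folder G H T \<longleftrightarrow> loop_folder G H T \<and>
     (\<forall>g \<in> carrier G. (\<lambda>t. inv\<^bsub>G\<^esub> g \<otimes>\<^bsub>G\<^esub> t \<otimes>\<^bsub>G\<^esub> g) ` T = T)"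

definition centralizer :: "('a, 'b) monoid_scheme \<Rightarrow> 'a \<Rightarrow> 'a set" where
  "centralizer G t = {g \<in> carrier G. g \<otimes>\<^bsub>G\<^esub> t = t \<otimes>\<^bsub>G\<^esub> g}"

end

theory Submission
  imports Defs
begin

lemma cent_subgroup:
  fixes G (structure)
  assumes "group G" "t \<in> carrier G"
  shows "subgroup (centralizer G t) G"
proof -
  interpret group G by fact
  show ?thesis
  proof
    show "centralizer G t \<subseteq> carrier G" by (auto simp: centralizer_def)
    show "\<one> \<in> centralizer G t" using assms(2) by (simp add: centralizer_def)
    fix x y assume x: "x \<in> centralizer G t" and y: "y \<in> centralizer G t"
    then have xc: "x \<in> carrier G" "x \<otimes> t = t \<otimes> x" and yc: "y \<in> carrier G" "y \<otimes> t = t \<otimes> y"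
      by (auto simp: centralizer_def)
    have "x \<otimes> y \<otimes> t = x \<otimes> (y \<otimes> t)" using xc(1) yc(1) assms(2) by (simp add: m_assoc)
    also have "\<dots> = x \<otimes> (t \<otimes> y)" by (simp only: yc(2))
    also have "\<dots> = (x \<otimes> t) \<otimes> y" using xc(1) yc(1) assms(2) by (simp add: m_assoc)
    also have "\<dots> = (t \<otimes> x) \<otimes> y" by (simp only: xc(2))
    also have "\<dots> = t \<otimes> (x \<otimes> y)" using xc(1) yc(1) assms(2) by (simp add: m_assoc)
    finally have "x \<otimes> y \<otimes> t = t \<otimes> (x \<otimes> y)" .
    then show "x \<otimes> y \<in> centralizer G t" using xc yc by (simp add: centralizer_def)
    have "inv x \<otimes> t = inv x \<otimes> (t \<otimes> x) \<otimes> inv x"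
      using xc assms(2) by (simp add: m_assoc)
    also have "\<dots> = inv x \<otimes> (x \<otimes> t) \<otimes> inv x" by (simp only: xc(2))
    also have "\<dots> = (inv x \<otimes> x) \<otimes> t \<otimes> inv x" using xc(1) assms(2) by (simp add: m_assoc[symmetric])
    also have "\<dots> = t \<otimes> inv x" using xc(1) assms(2) by simp
    finally show "inv x \<in> centralizer G t" using xc by (simp add: centralizer_def)
  qed
qed

lemma conj_eq_coset:
  fixes G (structure)
  assumes "group G" "t \<in> carrier G" "g \<in> carrier G" "g' \<in> carrier G"
    and eq: "inv\<^bsub>G\<^esub> g \<otimes>\<^bsub>G\<^esub> t \<otimes>\<^bsub>G\<^esub> g = inv\<^bsub>G\<^esub> g' \<otimes>\<^bsub>G\<^esub> t \<otimes>\<^bsub>G\<^esub> g'"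
  shows "centralizer G t #>\<^bsub>G\<^esub> g = centralizer G t #>\<^bsub>G\<^esub> g'"
proof -
  interpret group G by fact
  define x where "x = g' \<otimes> inv g"
  have xc: "x \<in> carrier G" using assms(3,4) by (simp add: x_def)
  have "x \<otimes> t \<otimes> inv x = g' \<otimes> (inv g \<otimes> t \<otimes> g) \<otimes> inv g'"
    using assms(2-4) by (simp add: x_def m_assoc inv_mult_group)
  also have "\<dots> = g' \<otimes> (inv g' \<otimes> t \<otimes> g') \<otimes> inv g'"
    using eq by simp
  also have "\<dots> = (g' \<otimes> inv g') \<otimes> t \<otimes> (g' \<otimes> inv g')"
    using assms(2-4) by (simp add: m_assoc, simp add: m_assoc[symmetric])
  also have "\<dots> = t" using assms(2-4) by simp
  finally have "x \<otimes> t \<otimes> inv x = t" .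
  then have "x \<otimes> t = t \<otimes> x"
  proof -
    have "x \<otimes> t = (x \<otimes> t \<otimes> inv x) \<otimes> x" using xc assms(2) by (simp add: m_assoc)
    also have "\<dots> = t \<otimes> x" using \<open>x \<otimes> t \<otimes> inv x = t\<close> by simp
    finally show ?thesis .
  qed
  then have xC: "x \<in> centralizer G t" using xc by (simp add: centralizer_def)
  have sg: "subgroup (centralizer G t) G" by (rule cent_subgroup[OF assms(1,2)])
  have "g' = x \<otimes> g" using assms(3,4) by (simp add: x_def m_assoc)
  then have "centralizer G t #> g' = (centralizer G t #> x) #> g"
    using coset_mult_assoc[OF subgroup.subset[OF sg] xc assms(3)] by simp
  also have "\<dots> = centralizer G t #> g"
    using subgroup.rcos_const[OF sg assms(1) xC] by simp
  finally show ?thesis by simp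
qed

lemma main_aux:
  fixes G (structure) and H K T :: "'a set"
  assumes "RCC_loop_folder G H T"
    and "subgroup K G"
    and "H <#> derived G (carrier G) \<subseteq> K"
    and tT: "t \<in> T"
  shows "card (rcosets (centralizer G t)) \<le> card (rcosets\<^bsub>G\<lparr>carrier := K\<rparr>\<^esub> H)"
proof -
  have grp: "group G" and fin: "finite (carrier G)" and HG: "subgroup H G"
    and TG: "T \<subseteq> carrier G" and RCC: "\<forall>g \<in> carrier G. (\<lambda>t. inv\<^bsub>G\<^esub> g \<otimes>\<^bsub>G\<^esub> t \<otimes>\<^bsub>G\<^esub> g) ` T = T"
    and tr: "right_transversal G (conj_set G H \<one>\<^bsub>G\<^esub>) T"
  proof -
    have LF: "loop_folder G H T" and R: "\<forall>g \<in> carrier G. (\<lambda>t. inv\<^bsub>G\<^esub> g \<otimes>\<^bsub>G\<^esub> t \<otimes>\<^bsub>G\<^esub> g) ` T = T"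
      using assms(1) unfolding RCC_loop_folder_def by simp_all
    have g: "group G" and f: "finite (carrier G)" and hg: "subgroup H G" and tg: "T \<subseteq> carrier G"
      and ta: "\<forall>g \<in> carrier G. right_transversal G (conj_set G H g) T"
      using LF unfolding loop_folder_def by simp_all
    have "\<one>\<^bsub>G\<^esub> \<in> carrier G" using g by (rule monoid.one_closed[OF group.is_monoid])
    then have "right_transversal G (conj_set G H \<one>\<^bsub>G\<^esub>) T" using ta by (rule bspec[rotated])
    then show "group G" "finite (carrier G)" "subgroup H G" "T \<subseteq> carrier G"
      "\<forall>g \<in> carrier G. (\<lambda>t. inv\<^bsub>G\<^esub> g \<otimes>\<^bsub>G\<^esub> t \<otimes>\<^bsub>G\<^esub> g) ` T = T"
      "right_transversal G (conj_set G H \<one>\<^bsub>G\<^esub>) T" using g f hg tg R by simp_all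
  qed
  interpret group G by (rule grp)
  have "conj_set G H \<one> = (\<lambda>h. h) ` H" unfolding conj_set_def
  proof (rule image_cong)
    fix h assume "h \<in> H"
    then have "h \<in> carrier G" using subgroup.subset[OF HG] by blast
    then show "inv \<one> \<otimes> h \<otimes> \<one> = h" by simp
  qed simp
  then have Hc: "conj_set G H \<one> = H" by simp
  have trH: "\<forall>C \<in> rcosets H. \<exists>!s. s \<in> T \<and> s \<in> C" using tr Hc by (simp add: right_transversal_def)
  have tc: "t \<in> carrier G" using tT TG by blast
  let ?C = "centralizer G t"
  define \<psi> where "\<psi> g = H #> (inv g \<otimes> t \<otimes> g \<otimes> inv t)" for g
  have comm_in_K: "inv g \<otimes> t \<otimes> g \<otimes> inv t \<in> K" if g: "g \<in> carrier G" for g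
  proof -
    have "inv g \<otimes> t \<otimes> inv (inv g) \<otimes> inv t \<in> derived_set G (carrier G)"
      by (rule UN_I[OF inv_closed[OF g]], rule UN_I[OF tc]) simp
    then have d: "inv g \<otimes> t \<otimes> g \<otimes> inv t \<in> derived G (carrier G)"
      using g by (simp add: derived_def generate.incl)
    have "\<one> \<otimes> (inv g \<otimes> t \<otimes> g \<otimes> inv t) \<in> H <#> derived G (carrier G)"
      using d subgroup.one_closed[OF HG] unfolding set_mult_def by blast
    then have "inv g \<otimes> t \<otimes> g \<otimes> inv t \<in> H <#> derived G (carrier G)" using g tc by simp
    then show ?thesis using assms(3) by blast
  qed
  have rcK: "rcosets\<^bsub>G\<lparr>carrier := K\<rparr>\<^esub> H = (\<lambda>a. H #> a) ` K"
  proof -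
    have "\<And>a. H #>\<^bsub>G\<lparr>carrier := K\<rparr>\<^esub> a = H #> a" by (simp add: r_coset_def)
    then show ?thesis unfolding RCOSETS_def by (simp add: UNION_singleton_eq_range)
  qed
  have psi_in: "\<psi> ` carrier G \<subseteq> rcosets\<^bsub>G\<lparr>carrier := K\<rparr>\<^esub> H"
    using comm_in_K unfolding rcK \<psi>_def by blast
  have finK: "finite (rcosets\<^bsub>G\<lparr>carrier := K\<rparr>\<^esub> H)"
    unfolding rcK using fin subgroup.subset[OF assms(2)] finite_subset by blast
  have key: "?C #> g = ?C #> g'" if g: "g \<in> carrier G" and g': "g' \<in> carrier G"
      and eq: "\<psi> g = \<psi> g'" for g g'
  proof -
    let ?s = "inv g \<otimes> t \<otimes> g" and ?s' = "inv g' \<otimes> t \<otimes> g'"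
    have "?s \<in> (\<lambda>t. inv g \<otimes> t \<otimes> g) ` T" using tT by (rule imageI)
    then have sT: "?s \<in> T" using RCC g by simp
    have "?s' \<in> (\<lambda>t. inv g' \<otimes> t \<otimes> g') ` T" using tT by (rule imageI)
    then have sT': "?s' \<in> T" using RCC g' by simp
    have sc: "?s \<in> carrier G" "?s' \<in> carrier G" using g g' tc by auto
    have Hs: "H \<subseteq> carrier G" using HG subgroup.subset by blast
    have "(H #> (?s \<otimes> inv t)) #> t = (H #> (?s' \<otimes> inv t)) #> t"
      using eq by (simp add: \<psi>_def)
    then have "H #> ?s = H #> ?s'"
      using sc tc Hs by (simp add: coset_mult_assoc m_assoc)
    moreover have "H #> ?s \<in> rcosets H" using rcosetsI Hs sc by blast
    moreover have "?s \<in> H #> ?s" "?s' \<in> H #> ?s'" using rcos_self HG sc by blast+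
    ultimately have "?s = ?s'"
    proof -
      assume e: "H #> ?s = H #> ?s'" and r: "H #> ?s \<in> rcosets H" and m: "?s \<in> H #> ?s" "?s' \<in> H #> ?s'"
      have "\<exists>!s. s \<in> T \<and> s \<in> H #> ?s" using trH r by blast
      then obtain s0 where "\<forall>y. y \<in> T \<and> y \<in> H #> ?s \<longrightarrow> y = s0" by blast
      then have u: "\<And>y. y \<in> T \<Longrightarrow> y \<in> H #> ?s \<Longrightarrow> y = s0" by blast
      have m2: "?s' \<in> H #> ?s" using m(2) e by simp
      have "?s = s0" by (rule u[OF sT m(1)])
      moreover have "?s' = s0" by (rule u[OF sT' m2])
      ultimately show ?thesis by simp
    qed
    then show ?thesis by (rule conj_eq_coset[OF grp tc g g'])
  qed
  define h where "h y = ?C #> (SOME g. g \<in> carrier G \<and> \<psi> g = y)" for y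
  have "rcosets ?C \<subseteq> h ` (\<psi> ` carrier G)"
  proof
    fix Y assume "Y \<in> rcosets ?C"
    then obtain g where g: "g \<in> carrier G" "Y = ?C #> g" by (auto simp: RCOSETS_def)
    define g' where "g' = (SOME g'. g' \<in> carrier G \<and> \<psi> g' = \<psi> g)"
    have "g' \<in> carrier G \<and> \<psi> g' = \<psi> g" unfolding g'_def
      by (rule someI[of _ g]) (simp add: g(1))
    then have "?C #> g' = ?C #> g" using key[of g' g] g(1) by blast
    moreover have "h (\<psi> g) = ?C #> g'" by (simp add: h_def g'_def)
    ultimately have "h (\<psi> g) = Y" using g(2) by simp
    then show "Y \<in> h ` (\<psi> ` carrier G)" using g by blast
  qed
  then have "card (rcosets ?C) \<le> card (h ` (\<psi> ` carrier G))"
    using fin by (intro card_mono) auto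
  also have "\<dots> \<le> card (\<psi> ` carrier G)" using fin by (intro card_image_le) auto
  also have "\<dots> \<le> card (rcosets\<^bsub>G\<lparr>carrier := K\<rparr>\<^esub> H)"
    using psi_in finK by (intro card_mono)
  finally show "card (rcosets ?C) \<le> card (rcosets\<^bsub>G\<lparr>carrier := K\<rparr>\<^esub> H)" .
qed

theorem lemma3p3:
  fixes G :: "('a, 'b) monoid_scheme" and H K T :: "'a set"
  assumes "RCC_loop_folder G H T"
    and "subgroup K G"
    and "H <#>\<^bsub>G\<^esub> derived G (carrier G) \<subseteq> K"
  shows "\<forall>t \<in> T. card (rcosets\<^bsub>G\<^esub> (centralizer G t))
                 \<le> card (rcosets\<^bsub>G\<lparr>carrier := K\<rparr>\<^esub> H)"
  using main_aux[OF assms] by blast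

end
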